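(* Let $W, w_1,w_2,w_3,c_1,c_2,c_3$ be positive integers with $w_1<w_2<w_3$, $c_1<c_2<c_3$ and $\frac{c_1}{w_1}>\frac{c_2}{w_2}>\frac{c_3}{w_3}$. Let $D=\{(z_1,z_2)\in(\mathbb{Z}_{\ge 0})^2: z_iw_i\le W/2,\ i=1,2\}$ and define $C:D\to\mathbb{R}$ by $C(z_1,z_2)=c_1z_1+c_2z_2+c_3\left\lceil\frac{W-w_1z_1-w_2z_2}{w_3}\right\rceil$. Then $(D,C)$ is an Ameso($c_3$) pair, i.e., minimizing $C$ over $D$ is an Ameso($c_3$) optimization problem.
   Context: Floors and ceilings of vectors are taken componentwise. A set $D^n\subseteq\mathbb{Z}^n$ is an Ameso set if $\lceil(\vec x+\vec y)/2\rceil,\lfloor(\vec x+\vec y)/2\rfloor\in D^n$ for all $\vec x,\vec y\in D^n$. For $K\ge 0$, $(D^n,f)$ is an Ameso($K$) pair if $D^n$ is an Ameso set, $f:D^n\to\mathbb{R}$ is bounded below, and $f(\vec x)+f(\vec y)+K\ge f(\lceil(\vec x+\vec y)/2\rceil)+f(\lfloor(\vec x+\vec y)/2\rfloor)$ for all $\vec x,\vec y\in D^n$; minimizing $f$ over $D^n$ is then called an Ameso($K$) optimization problem. *)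

theory Defs
  imports "HOL-Analysis.Analysis"
begin

definition mid_ceil :: "int ^ 'n \<Rightarrow> int ^ 'n \<Rightarrow> int ^ 'n" where
  "mid_ceil x y = (\<chi> i. \<lceil>(real_of_int (x $ i) + real_of_int (y $ i)) / 2\<rceil>)"

definition mid_floor :: "int ^ 'n \<Rightarrow> int ^ 'n \<Rightarrow> int ^ 'n" where
  "mid_floor x y = (\<chi> i. \<lfloor>(real_of_int (x $ i) + real_of_int (y $ i)) / 2\<rfloor>)"

definition ameso_set :: "(int ^ 'n) set \<Rightarrow> bool" where
  "ameso_set D \<longleftrightarrow> (\<forall>x\<in>D. \<forall>y\<in>D. mid_ceil x y \<in> D \<and> mid_floor x y \<in> D)"

definition ameso_pair :: "real \<Rightarrow> (int ^ 'n) set \<Rightarrow> (int ^ 'n \<Rightarrow> real) \<Rightarrow> bool" where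
  "ameso_pair K D f \<longleftrightarrow> K \<ge> 0 \<and> ameso_set D \<and> (\<exists>m. \<forall>x\<in>D. m \<le> f x) \<and>
     (\<forall>x\<in>D. \<forall>y\<in>D. f x + f y + K \<ge> f (mid_ceil x y) + f (mid_floor x y))"

end

theory Submission
  imports Defs
begin

lemma cf_sum: "\<lceil>(real_of_int a + real_of_int b)/2\<rceil> + \<lfloor>(real_of_int a + real_of_int b)/2\<rfloor> = a + (b::int)"
proof -
  have e: "(real_of_int a + real_of_int b)/2 = real_of_int (a+b) / real_of_int 2" by simp
  have f: "\<lfloor>real_of_int (a+b) / real_of_int 2\<rfloor> = (a+b) div 2"
    by (rule floor_divide_of_int_eq)
  have g: "\<lceil>real_of_int (a+b) / real_of_int 2\<rceil> = - ((-(a+b)) div 2)"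
  proof -
    have "\<lceil>real_of_int (a+b) / real_of_int 2\<rceil> = - \<lfloor>real_of_int (-(a+b)) / real_of_int 2\<rfloor>"
      by (simp add: ceiling_def minus_divide_left)
    also have "\<dots> = - ((-(a+b)) div 2)" by (simp only: floor_divide_of_int_eq)
    finally show ?thesis .
  qed
  show ?thesis unfolding e f g by presburger
qed

lemma ceil_mid_le: "a \<le> m \<Longrightarrow> b \<le> m \<Longrightarrow> \<lceil>(real_of_int a + real_of_int b)/2\<rceil> \<le> (m::int)"
  by (rule ceiling_le) (simp add: field_simps)

lemma floor_mid_le: "a \<le> m \<Longrightarrow> b \<le> m \<Longrightarrow> \<lfloor>(real_of_int a + real_of_int b)/2\<rfloor> \<le> (m::int)"
  using ceil_mid_le[of a m b] le_of_int_ceiling[of "(real_of_int a + real_of_int b)/2"] by linarith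

lemma ceil_mid_ge: "0 \<le> a \<Longrightarrow> 0 \<le> b \<Longrightarrow> 0 \<le> \<lceil>(real_of_int a + real_of_int b)/2\<rceil>"
  by simp

lemma floor_mid_ge: "0 \<le> a \<Longrightarrow> 0 \<le> b \<Longrightarrow> 0 \<le> \<lfloor>(real_of_int a + real_of_int b)/2\<rfloor>"
  by simp

lemma ceil_ineq:
  fixes a b p q w :: real
  assumes "a + b = p + q" "w > 0"
  shows "\<lceil>p/w\<rceil> + \<lceil>q/w\<rceil> \<le> \<lceil>a/w\<rceil> + \<lceil>b/w\<rceil> + 1"
proof -
  have "real_of_int \<lceil>p/w\<rceil> < p/w + 1" "real_of_int \<lceil>q/w\<rceil> < q/w + 1" by linarith+
  moreover have "a/w \<le> real_of_int \<lceil>a/w\<rceil>" "b/w \<le> real_of_int \<lceil>b/w\<rceil>" by linarith+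
  moreover have "p/w + q/w = a/w + b/w" using assms by (simp add: add_divide_distrib[symmetric])
  ultimately have "real_of_int (\<lceil>p/w\<rceil> + \<lceil>q/w\<rceil>) < real_of_int (\<lceil>a/w\<rceil> + \<lceil>b/w\<rceil> + 2)" by (simp only: of_int_add of_int_numeral)
  then show ?thesis by linarith
qed

theorem theorem5:
  fixes W w1 w2 w3 c1 c2 c3 :: int
    and D :: "(int ^ 2) set" and C :: "int ^ 2 \<Rightarrow> real"
  assumes pos: "W > 0" "w1 > 0" "w2 > 0" "w3 > 0" "c1 > 0" "c2 > 0" "c3 > 0"
    and w_ord: "w1 < w2" "w2 < w3"
    and c_ord: "c1 < c2" "c2 < c3"
    and ratio: "real_of_int c1 / real_of_int w1 > real_of_int c2 / real_of_int w2"
               "real_of_int c2 / real_of_int w2 > real_of_int c3 / real_of_int w3"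
    and D_def: "D = {z. 0 \<le> z $ 1 \<and> 0 \<le> z $ 2 \<and>
                     real_of_int (z $ 1 * w1) \<le> real_of_int W / 2 \<and>
                     real_of_int (z $ 2 * w2) \<le> real_of_int W / 2}"
    and C_def: "\<And>z. C z = real_of_int (c1 * z $ 1 + c2 * z $ 2) +
                 real_of_int c3 * real_of_int
                   \<lceil>real_of_int (W - w1 * z $ 1 - w2 * z $ 2) / real_of_int w3\<rceil>"
  shows "ameso_pair (real_of_int c3) D C"
proof -
  have Dmem: "z \<in> D \<longleftrightarrow> 0 \<le> z $ 1 \<and> 0 \<le> z $ 2 \<and> 2 * (z $ 1 * w1) \<le> W \<and> 2 * (z $ 2 * w2) \<le> W" for z
  proof -
    have "real_of_int (z $ 1 * w1) \<le> real_of_int W / 2 \<longleftrightarrow> 2 * (z $ 1 * w1) \<le> W"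
      "real_of_int (z $ 2 * w2) \<le> real_of_int W / 2 \<longleftrightarrow> 2 * (z $ 2 * w2) \<le> W" by linarith+
    then show ?thesis unfolding D_def by auto
  qed
  have mc: "mid_ceil x y $ i = \<lceil>(real_of_int (x $ i) + real_of_int (y $ i)) / 2\<rceil>" for x y :: "int^2" and i
    by (simp add: mid_ceil_def)
  have mf: "mid_floor x y $ i = \<lfloor>(real_of_int (x $ i) + real_of_int (y $ i)) / 2\<rfloor>" for x y :: "int^2" and i
    by (simp add: mid_floor_def)
  have sum: "mid_ceil x y $ i + mid_floor x y $ i = x $ i + y $ i" for x y :: "int^2" and i
    unfolding mc mf by (rule cf_sum)
  have box: "2 * (m * w) \<le> W" if "2 * (a * w) \<le> W" "2 * (b * w) \<le> W" "m \<le> max a b" "w > 0" for a b m w :: int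
  proof -
    have "m * w \<le> max a b * w" using that by (simp add: mult_right_mono)
    moreover have "max a b * w = a * w \<or> max a b * w = b * w" by (simp add: max_def)
    ultimately show ?thesis using that by linarith
  qed
  have aset: "ameso_set D"
    unfolding ameso_set_def
  proof (intro ballI conjI)
    fix x y assume x: "x \<in> D" and y: "y \<in> D"
    have le1: "mid_ceil x y $ 1 \<le> max (x$1) (y$1)" "mid_floor x y $ 1 \<le> max (x$1) (y$1)"
      "mid_ceil x y $ 2 \<le> max (x$2) (y$2)" "mid_floor x y $ 2 \<le> max (x$2) (y$2)"
      unfolding mc mf by (auto intro!: ceil_mid_le floor_mid_le)
    have ge: "0 \<le> mid_ceil x y $ 1" "0 \<le> mid_floor x y $ 1"
      "0 \<le> mid_ceil x y $ 2" "0 \<le> mid_floor x y $ 2"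
      using x y unfolding Dmem mc mf by auto
    show "mid_ceil x y \<in> D" "mid_floor x y \<in> D"
      using x y ge le1 box pos unfolding Dmem by meson+
  qed
  have lb: "\<forall>z\<in>D. 0 \<le> C z"
  proof
    fix z assume z: "z \<in> D"
    have "0 \<le> W - w1 * z $ 1 - w2 * z $ 2" using z unfolding Dmem by (simp add: algebra_simps)
    then have "0 \<le> real_of_int (W - w1 * z $ 1 - w2 * z $ 2) / real_of_int w3"
      using pos by (intro divide_nonneg_pos) (simp only: of_int_0_le_iff, simp)
    then have "0 \<le> \<lceil>real_of_int (W - w1 * z $ 1 - w2 * z $ 2) / real_of_int w3\<rceil>"
      by linarith
    moreover have "0 \<le> c1 * z $ 1 + c2 * z $ 2" using z pos unfolding Dmem by simp
    ultimately show "0 \<le> C z" unfolding C_def using pos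
      by (metis add_nonneg_nonneg less_imp_le of_int_0_le_iff zero_le_mult_iff)
  qed
  have ineq: "C x + C y + real_of_int c3 \<ge> C (mid_ceil x y) + C (mid_floor x y)" for x y
  proof -
    define A where "A = (\<lambda>z::int^2. W - w1 * z $ 1 - w2 * z $ 2)"
    define L where "L = (\<lambda>z::int^2. c1 * z $ 1 + c2 * z $ 2)"
    define K where "K = (\<lambda>z::int^2. \<lceil>real_of_int (A z) / real_of_int w3\<rceil>)"
    have Cz: "C z = real_of_int (L z + c3 * K z)" for z
      unfolding C_def L_def K_def A_def by simp
    have s1: "mid_ceil x y $ 1 + mid_floor x y $ 1 = x $ 1 + y $ 1" and s2: "mid_ceil x y $ 2 + mid_floor x y $ 2 = x $ 2 + y $ 2"
      using sum by auto
    have "c1 * (mid_ceil x y $ 1 + mid_floor x y $ 1) = c1 * (x $ 1 + y $ 1)"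
      "c2 * (mid_ceil x y $ 2 + mid_floor x y $ 2) = c2 * (x $ 2 + y $ 2)"
      "w1 * (mid_ceil x y $ 1 + mid_floor x y $ 1) = w1 * (x $ 1 + y $ 1)"
      "w2 * (mid_ceil x y $ 2 + mid_floor x y $ 2) = w2 * (x $ 2 + y $ 2)"
      using s1 s2 by simp_all
    then have lin: "L (mid_ceil x y) + L (mid_floor x y) = L x + L y"
      and asum: "A x + A y = A (mid_ceil x y) + A (mid_floor x y)"
      unfolding L_def A_def by (simp_all only: distrib_left)
    have Asum: "real_of_int (A x) + real_of_int (A y) = real_of_int (A (mid_ceil x y)) + real_of_int (A (mid_floor x y))"
      using asum by (metis of_int_add)
    have ci: "K (mid_ceil x y) + K (mid_floor x y) \<le> K x + K y + 1"
      unfolding K_def by (rule ceil_ineq[OF Asum]) (use pos in simp)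
    then have "c3 * (K (mid_ceil x y) + K (mid_floor x y)) \<le> c3 * (K x + K y + 1)"
      using pos by (intro mult_left_mono) simp_all
    then have "L (mid_ceil x y) + c3 * K (mid_ceil x y) + (L (mid_floor x y) + c3 * K (mid_floor x y))
       \<le> L x + c3 * K x + (L y + c3 * K y) + c3"
      using lin by (simp only: distrib_left)
    then have "real_of_int (L (mid_ceil x y) + c3 * K (mid_ceil x y)) + real_of_int (L (mid_floor x y) + c3 * K (mid_floor x y))
       \<le> real_of_int (L x + c3 * K x) + real_of_int (L y + c3 * K y) + real_of_int c3"
      by (metis of_int_add of_int_le_iff)
    then show ?thesis unfolding Cz by simp
  qed
  show ?thesis unfolding ameso_pair_def using aset lb ineq pos by auto
qed

end
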